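(* Let $F:(0,\infty)\to(0,\infty)$ be strictly decreasing and continuous with $\int_1^\infty F(x)\,dx<\infty$. Let $0<b<B$ and let $x_{-1}>x_{-2}>\cdots$ be reals with $x_{-1}<0$ and $b\le x_{-i}-x_{-i-1}\le B$ for all $i\ge1$. Let $x_0>x_{-1}$ be given. Then there exist reals $x_0<x_1<x_2<\cdots$ such that every particle $x_i$, $i\ge0$, is in equilibrium in the configuration $(x_n)_{n\in\mathbb Z}$, and moreover $$\min(b,\,x_0-x_{-1})\le x_{i+1}-x_i\le \max(B,\,x_0-x_{-1})\quad\text{for all } i\ge0.$$
   Context: For a strictly increasing sequence $(x_n)_{n\in\mathbb Z}$ of particle positions with force law $F$ (particles at distance $d$ repel with force $F(d)$), the particle at $x_n$ is in equilibrium if $\sum_{m<n}F(x_n-x_m)$ and $\sum_{m>n}F(x_m-x_n)$ are both finite and equal. *)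

theory Defs
  imports "HOL-Analysis.Analysis"
begin

definition in_equilibrium :: "(real \<Rightarrow> real) \<Rightarrow> (int \<Rightarrow> real) \<Rightarrow> int \<Rightarrow> bool" where
  "in_equilibrium F x n \<longleftrightarrow>
     (\<lambda>m. F (x n - x m)) summable_on {..<n} \<and>
     (\<lambda>m. F (x m - x n)) summable_on {n<..} \<and>
     (\<Sum>\<^sub>\<infinity>m\<in>{..<n}. F (x n - x m)) = (\<Sum>\<^sub>\<infinity>m\<in>{n<..}. F (x m - x n))"

end

theory Submission imports Defs "HOL-Library.Diagonal_Subsequence" begin


locale eqsetup =
  fixes F :: "real \<Rightarrow> real" and x :: "int \<Rightarrow> real" and b B :: real
  assumes Fpos: "\<And>t. 0 < t \<Longrightarrow> 0 < F t"
    and Fdec: "\<And>s t. 0 < s \<Longrightarrow> s < t \<Longrightarrow> F t < F s"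
    and Fcont: "continuous_on {0<..} F"
    and Fint: "F integrable_on {1..}"
    and bpos: "0 < b" and bB: "b < B"
    and gaps: "\<And>i::int. i \<ge> 1 \<Longrightarrow> b \<le> x (-i) - x (-i-1) \<and> x (-i) - x (-i-1) \<le> B"
    and x0: "x 0 > x (-1)"
begin

lemma Fmono: "0 < s \<Longrightarrow> s \<le> t \<Longrightarrow> F t \<le> F s"
  using Fdec[of s t] by (cases "s = t") auto

lemma summable_Fe:
  assumes e: "e > 0"
  shows "summable (\<lambda>j. F (e * (real j + 1)))"
proof -
  define J where "J = nat \<lceil>1/e\<rceil>"
  have eJ: "e * real J \<ge> 1"
  proof -
    have "real J \<ge> 1/e" unfolding J_def by linarith
    hence "e * real J \<ge> e * (1/e)" using e by (intro mult_left_mono) auto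
    thus ?thesis using e by simp
  qed
  define I where "I = integral {1..} F"
  have intI: "\<And>u v. 1 \<le> u \<Longrightarrow> F integrable_on {u..v}"
    by (rule integrable_continuous_interval, rule continuous_on_subset[OF Fcont]) auto
  have step: "e * F (e * (real (j + J) + 1)) \<le> integral {e * real (j+J) .. e * real (Suc j + J)} F" for j
  proof -
    have "integral {e * real (j+J) .. e * real (Suc j + J)} (\<lambda>t. F (e * (real (j + J) + 1)))
       \<le> integral {e * real (j+J) .. e * real (Suc j + J)} F"
    proof (rule integral_le)
      show "F integrable_on {e * real (j + J)..e * real (Suc j + J)}"
        using eJ e by (intro intI) (auto intro: order_trans[OF eJ] mult_left_mono)
      fix t assume t: "t \<in> {e * real (j + J)..e * real (Suc j + J)}"
      have "0 < t" using t eJ e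
        by (smt (verit, best) atLeastAtMost_iff mult_left_mono of_nat_0_le_iff of_nat_add)
      moreover have "t \<le> e * (real (j + J) + 1)" using t by (simp add: algebra_simps)
      ultimately show "F (e * (real (j + J) + 1)) \<le> F t" by (rule Fmono)
    qed (rule integrable_const_ivl)
    moreover have "integral {e * real (j+J) .. e * real (Suc j + J)} (\<lambda>t. F (e * (real (j + J) + 1)))
        = e * F (e * (real (j + J) + 1))"
    proof -
      have le: "e * real (j+J) \<le> e * real (Suc j + J)" using e by simp
      have "e * real (Suc j + J) - e * real (j+J) = e" by (simp add: algebra_simps)
      with le show ?thesis by simp
    qed
    ultimately show ?thesis by linarith
  qed
  have partial: "e * (\<Sum>j<N. F (e * (real (j + J) + 1))) \<le> integral {e * real J .. e * real (N + J)} F" for N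
  proof (induction N)
    case 0 then show ?case by simp
  next
    case (Suc N)
    have "e * (\<Sum>j<Suc N. F (e * (real (j + J) + 1)))
        = e * (\<Sum>j<N. F (e * (real (j + J) + 1))) + e * F (e * (real (N + J) + 1))"
      by (simp add: algebra_simps)
    also have "\<dots> \<le> integral {e * real J .. e * real (N + J)} F + integral {e * real (N+J) .. e * real (Suc N + J)} F"
      using Suc step[of N] by linarith
    also have "\<dots> = integral {e * real J .. e * real (Suc N + J)} F"
      by (rule Henstock_Kurzweil_Integration.integral_combine) (use e eJ in \<open>auto intro!: intI mult_left_mono\<close>)
    finally show ?case by simp
  qed
  have "integral {e * real J .. e * real (N + J)} F \<le> I" for N
    unfolding I_def
  proof (rule integral_subset_le)
    show "{e * real J..e * real (N + J)} \<subseteq> {1..}" using eJ by auto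
    show "F integrable_on {e * real J..e * real (N + J)}" using eJ by (intro intI) auto
    show "F integrable_on {1..}" by (rule Fint)
    show "\<forall>t\<in>{1..}. 0 \<le> F t" using Fpos by (auto intro: less_imp_le)
  qed
  hence "(\<Sum>j<N. F (e * (real (j + J) + 1))) \<le> I / e" for N
    using partial[of N] e by (simp add: field_simps) (smt (verit, best) mult.commute)
  hence "summable (\<lambda>j. F (e * (real (j + J) + 1)))"
    by (intro summableI_nonneg_bounded[where x="I/e"]) (use Fpos e in \<open>auto intro: less_imp_le\<close>)
  thus ?thesis using summable_iff_shift[of "\<lambda>j. F (e * (real j + 1))" J] by simp
qed


definition "g0 = x 0 - x (-1)"
definition "mg = min b g0"
definition "Mg = max B g0"
definition "cc = mg / 2"
definition "G t = F (max cc t) + max 0 (cc - t)"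

lemma g0_pos: "0 < g0" using x0 by (simp add: g0_def)
lemma mg_pos: "0 < mg" using g0_pos bpos by (simp add: mg_def)
lemma cc_pos: "0 < cc" using mg_pos by (simp add: cc_def)
lemma cc_less: "cc < mg" using mg_pos by (simp add: cc_def)
lemma mg_le_Mg: "mg < Mg" using bB by (auto simp: mg_def Mg_def)

lemma G_pos: "0 < G t"
proof -
  have "0 < F (max cc t)" using Fpos cc_pos by (simp add: less_max_iff_disj)
  moreover have "0 \<le> max 0 (cc - t)" by simp
  ultimately show ?thesis unfolding G_def by linarith
qed

lemma G_strict: "s < t \<Longrightarrow> G t < G s"
  unfolding G_def using cc_pos Fmono[of "max cc s" "max cc t"] Fdec[of "max cc s" "max cc t"]
  by (cases "t \<le> cc"; cases "s \<le> cc") (auto simp: max_def)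

lemma G_mono: "s \<le> t \<Longrightarrow> G t \<le> G s"
  using G_strict[of s t] by (cases "s = t") auto

lemma G_F: "cc \<le> t \<Longrightarrow> G t = F t"
  unfolding G_def by (simp add: max_def)

lemma F_isCont: "0 < t \<Longrightarrow> isCont F t"
  using Fcont continuous_on_eq_continuous_at[of "{0<..}" F] by auto

lemma G_cont: "isCont G t"
proof -
  have "isCont (\<lambda>t. F (max cc t)) t"
    by (rule continuous_at_compose[unfolded o_def, of _ "\<lambda>t. max cc t" F])
       (auto intro!: continuous_intros F_isCont simp: cc_pos less_max_iff_disj)
  thus ?thesis unfolding G_def by (auto intro!: continuous_intros)
qed

definition "hb a C j = G (a * (real j + 1) - C)"

lemma summable_hb:
  assumes a: "a > 0" shows "summable (hb a C)"
proof (rule summable_comparison_test'[OF summable_Fe[of "a/2"]])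
  show "0 < a/2" using a by simp
  define N where "N = nat \<lceil>2 * (\<bar>C\<bar> + cc) / a\<rceil>"
  show "norm (hb a C n) \<le> F (a / 2 * (real n + 1))" if n: "N \<le> n" for n
  proof -
    have "real n \<ge> 2 * (\<bar>C\<bar> + cc) / a" using n unfolding N_def by linarith
    hence "a * real n \<ge> 2 * (\<bar>C\<bar> + cc)" using a by (simp add: field_simps)
    moreover have "a/2 * (real n + 1) = (a*real n)/2 + a/2" "a * (real n + 1) = a*real n + a"
      by (simp_all add: algebra_simps)
    ultimately have h1: "a/2 * (real n + 1) \<le> a * (real n + 1) - C"
      using a abs_ge_self[of C] cc_pos by argo
    have h2: "cc \<le> a/2 * (real n + 1)"
      using \<open>a * real n \<ge> 2 * (\<bar>C\<bar> + cc)\<close> \<open>a/2 * (real n + 1) = (a*real n)/2 + a/2\<close> a cc_pos by argo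
    have "hb a C n = F (a * (real n + 1) - C)"
      unfolding hb_def using h1 h2 by (intro G_F) linarith
    also have "\<dots> \<le> F (a / 2 * (real n + 1))"
      using h1 h2 cc_pos by (intro Fmono) auto
    finally show ?thesis using G_pos[of "a * (real n + 1) - C"] by (simp add: hb_def)
  qed
qed

definition "adm a C y \<longleftrightarrow> (\<forall>i j. i \<le> j \<longrightarrow> a * real_of_int (j - i) - C \<le> y j - y i)"

definition "Lf y i = (\<Sum>j. G (y i - y (i - 1 - int j)))"
definition "Rf y i = (\<Sum>j. G (y (i + 1 + int j) - y i))"
definition "Nf y i = Lf y i - Rf y i"

lemma adm_L: "adm a C y \<Longrightarrow> G (y i - y (i - 1 - int j)) \<le> hb a C j"
  unfolding adm_def hb_def
  by (rule G_mono) (drule spec[of _ "i - 1 - int j"], drule spec[of _ i], simp add: algebra_simps)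

lemma adm_R: "adm a C y \<Longrightarrow> G (y (i + 1 + int j) - y i) \<le> hb a C j"
  unfolding adm_def hb_def
  by (rule G_mono) (drule spec[of _ i], drule spec[of _ "i + 1 + int j"], simp add: algebra_simps)

lemma summable_L: "a > 0 \<Longrightarrow> adm a C y \<Longrightarrow> summable (\<lambda>j. G (y i - y (i - 1 - int j)))"
  apply (rule summable_comparison_test[OF _ summable_hb[of a C]])
  using adm_L G_pos by (auto intro!: exI[of _ 0] simp: abs_of_pos G_pos)

lemma summable_R: "a > 0 \<Longrightarrow> adm a C y \<Longrightarrow> summable (\<lambda>j. G (y (i + 1 + int j) - y i))"
  apply (rule summable_comparison_test[OF _ summable_hb[of a C]])
  using adm_R G_pos by (auto intro!: exI[of _ 0] simp: abs_of_pos G_pos)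

lemma suminf_less_strict:
  fixes f g :: "nat \<Rightarrow> real"
  assumes "summable f" "summable g" "\<And>n. f n \<le> g n" "f k < g k"
  shows "suminf f < suminf g"
proof -
  have "0 < (\<Sum>n. g n - f n)"
    by (rule suminf_pos2[of _ k]) (use assms in \<open>auto intro: summable_diff\<close>)
  also have "\<dots> = suminf g - suminf f" using assms by (intro suminf_diff[symmetric]) auto
  finally show ?thesis by simp
qed

lemma cmp_L:
  assumes "a > 0" "a' > 0" "adm a C y" "adm a' C' z" "\<forall>j. y j - z j \<le> y i - z i"
  shows "Lf y i \<le> Lf z i"
  unfolding Lf_def
proof (rule suminf_le)
  fix j
  show "G (y i - y (i - 1 - int j)) \<le> G (z i - z (i - 1 - int j))"
    using assms(5) by (intro G_mono) (drule spec[of _ "i - 1 - int j"], simp)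
qed (use assms summable_L in auto)

lemma cmp_R:
  assumes "a > 0" "a' > 0" "adm a C y" "adm a' C' z" "\<forall>j. y j - z j \<le> y i - z i"
  shows "Rf z i \<le> Rf y i"
  unfolding Rf_def
proof (rule suminf_le)
  fix j
  show "G (z (i + 1 + int j) - z i) \<le> G (y (i + 1 + int j) - y i)"
    using assms(5) by (intro G_mono) (drule spec[of _ "i + 1 + int j"], simp)
qed (use assms summable_R in auto)

lemma cmp:
  assumes "a > 0" "a' > 0" "adm a C y" "adm a' C' z" "\<forall>j. y j - z j \<le> y i - z i"
  shows "Nf y i \<le> Nf z i"
  using cmp_L[OF assms] cmp_R[OF assms] unfolding Nf_def by linarith

lemma cmp_strict:
  assumes "a > 0" "a' > 0" "adm a C y" "adm a' C' z" "\<forall>j. y j - z j \<le> y i - z i"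
    and "y j0 - z j0 < y i - z i"
  shows "Nf y i < Nf z i"
proof (cases "j0 < i")
  case True
  define k where "k = nat (i - 1 - j0)"
  have jk: "i - 1 - int k = j0" using True unfolding k_def by simp
  have "Lf y i < Lf z i"
    unfolding Lf_def
  proof (rule suminf_less_strict[where k=k])
    fix j
    show "G (y i - y (i - 1 - int j)) \<le> G (z i - z (i - 1 - int j))"
      using assms(5) by (intro G_mono) (drule spec[of _ "i - 1 - int j"], simp)
    show "G (y i - y (i - 1 - int k)) < G (z i - z (i - 1 - int k))"
      unfolding jk using assms(6) by (intro G_strict) simp
  qed (use assms summable_L in auto)
  then show ?thesis using cmp_R[OF assms(1-5)] unfolding Nf_def by linarith
next
  case False
  with assms(6) have F: "j0 > i" by (cases "j0 = i") auto
  define k where "k = nat (j0 - i - 1)"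
  have jk: "i + 1 + int k = j0" using F unfolding k_def by simp
  have "Rf z i < Rf y i"
    unfolding Rf_def
  proof (rule suminf_less_strict[where k=k])
    fix j
    show "G (z (i + 1 + int j) - z i) \<le> G (y (i + 1 + int j) - y i)"
      using assms(5) by (intro G_mono) (drule spec[of _ "i + 1 + int j"], simp)
    show "G (z (i + 1 + int k) - z i) < G (y (i + 1 + int k) - y i)"
      unfolding jk using assms(6) by (intro G_strict) simp
  qed (use assms summable_R in auto)
  then show ?thesis using cmp_L[OF assms(1-5)] unfolding Nf_def by linarith
qed

lemma Nf_shift: "Nf (\<lambda>k. y (k + 1) + t) i = Nf y (i + 1)"
  unfolding Nf_def Lf_def Rf_def by (simp add: algebra_simps)

lemma adm_shift: "adm a C y \<Longrightarrow> adm a C (\<lambda>k. y (k + 1) + t)"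
  unfolding adm_def
proof (intro allI impI)
  fix i j :: int assume H: "\<forall>i j. i \<le> j \<longrightarrow> a * real_of_int (j - i) - C \<le> y j - y i" and "i \<le> j"
  hence "a * real_of_int ((j+1) - (i+1)) - C \<le> y (j+1) - y (i+1)" using H[rule_format, of "i+1" "j+1"] by simp
  thus "a * real_of_int (j - i) - C \<le> y (j + 1) + t - (y (i + 1) + t)" by simp
qed

lemma Nf_uniform: "Nf (\<lambda>k. p + real_of_int k * d) i = 0"
  unfolding Nf_def Lf_def Rf_def by (simp add: algebra_simps)

lemma Nf_tendsto:
  assumes a: "a > 0" and adm: "\<And>k. adm a C (Y k)" and lim: "\<And>j. (\<lambda>k. Y k j) \<longlonglongrightarrow> Yl j"
  shows "(\<lambda>k. Nf (Y k) i) \<longlonglongrightarrow> Nf Yl i"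
proof -
  have "(\<lambda>k. Lf (Y k) i) \<longlonglongrightarrow> Lf Yl i"
    unfolding Lf_def
  proof (rule conjunct2[OF conjunct2[OF tannerys_theorem[where M="hb a C"]]])
    fix j
    show "(\<lambda>k. G (Y k i - Y k (i - 1 - int j))) \<longlonglongrightarrow> G (Yl i - Yl (i - 1 - int j))"
      by (rule isCont_tendsto_compose[OF G_cont]) (intro tendsto_intros lim)
    show "\<forall>\<^sub>F (j, k) in at_top \<times>\<^sub>F sequentially. norm (G (Y k i - Y k (i - 1 - int j))) \<le> hb a C j"
      by (rule always_eventually) (use adm_L[OF adm] G_pos in \<open>auto simp: abs_of_pos G_pos\<close>)
  qed (use summable_hb a in auto)
  moreover have "(\<lambda>k. Rf (Y k) i) \<longlonglongrightarrow> Rf Yl i"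
    unfolding Rf_def
  proof (rule conjunct2[OF conjunct2[OF tannerys_theorem[where M="hb a C"]]])
    fix j
    show "(\<lambda>k. G (Y k (i + 1 + int j) - Y k i)) \<longlonglongrightarrow> G (Yl (i + 1 + int j) - Yl i)"
      by (rule isCont_tendsto_compose[OF G_cont]) (intro tendsto_intros lim)
    show "\<forall>\<^sub>F (j, k) in at_top \<times>\<^sub>F sequentially. norm (G (Y k (i + 1 + int j) - Y k i)) \<le> hb a C j"
      by (rule always_eventually) (use adm_R[OF adm] G_pos in \<open>auto simp: abs_of_pos G_pos\<close>)
  qed (use summable_hb a in auto)
  ultimately show ?thesis unfolding Nf_def by (intro tendsto_intros)
qed

end

context eqsetup begin

lemma gap_sum_ge:
  fixes y :: "int \<Rightarrow> real"
  assumes "\<And>t. i < t \<Longrightarrow> t \<le> j \<Longrightarrow> a \<le> y t - y (t - 1)" "i \<le> j"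
  shows "a * real_of_int (j - i) \<le> y j - y i"
proof -
  obtain k where k: "j = i + int k" using assms(2) by (metis zle_iff_zadd)
  have "\<forall>j. j = i + int k \<longrightarrow> (\<forall>t. i < t \<and> t \<le> j \<longrightarrow> a \<le> y t - y (t - 1)) \<longrightarrow> a * real_of_int (j - i) \<le> y j - y i"
  proof (induction k)
    case 0 then show ?case by simp
  next
    case (Suc k)
    show ?case
    proof (intro allI impI)
      fix j assume j: "j = i + int (Suc k)" and H: "\<forall>t. i < t \<and> t \<le> j \<longrightarrow> a \<le> y t - y (t - 1)"
      have "a * real_of_int (j - 1 - i) \<le> y (j - 1) - y i"
        using Suc.IH[rule_format, of "j - 1"] j H by auto
      moreover have "a \<le> y j - y (j - 1)" using H[rule_format, of j] j by simp
      ultimately show "a * real_of_int (j - i) \<le> y j - y i"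
        by (simp add: algebra_simps)
    qed
  qed
  thus ?thesis using k assms(1) by blast
qed

lemma gap_sum_le:
  fixes y :: "int \<Rightarrow> real"
  assumes "\<And>t. i < t \<Longrightarrow> t \<le> j \<Longrightarrow> y t - y (t - 1) \<le> a" "i \<le> j"
  shows "y j - y i \<le> a * real_of_int (j - i)"
  using gap_sum_ge[of i j "-a" "\<lambda>k. - y k"] assms by (simp add: algebra_simps)

lemma xgap: "t \<le> -1 \<Longrightarrow> b \<le> x t - x (t - 1) \<and> x t - x (t - 1) \<le> B"
  using gaps[of "-t"] by simp

lemma xgap_mg: "t \<le> 0 \<Longrightarrow> mg \<le> x t - x (t - 1)"
  using xgap[of t] unfolding mg_def g0_def by (cases "t = 0") auto

lemma xgap_Mg: "t \<le> 0 \<Longrightarrow> x t - x (t - 1) \<le> Mg"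
  using xgap[of t] unfolding Mg_def g0_def by (cases "t = 0") auto

lemma x_left: assumes "i \<le> j" "j \<le> 0" shows "b * real_of_int (j - i) - b \<le> x j - x i"
proof (cases "j \<le> -1")
  case True
  have "b * real_of_int (j - i) \<le> x j - x i"
    by (rule gap_sum_ge) (use xgap True assms in auto)
  thus ?thesis using bpos by simp
next
  case False
  hence j: "j = 0" using assms by simp
  show ?thesis
  proof (cases "i = 0")
    case True then show ?thesis using j bpos by simp
  next
    case False
    hence "b * real_of_int (-1 - i) \<le> x (-1) - x i"
      by (intro gap_sum_ge) (use xgap assms j in auto)
    thus ?thesis using j x0 by (simp add: algebra_simps)
  qed
qed

definition "conf n d w k = (if k \<le> 0 then x k else if k \<le> n then w k else w n + real_of_int (k - n) * d)"

lemma conf_left: "k \<le> 0 \<Longrightarrow> conf n d w k = x k" by (simp add: conf_def)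
lemma conf_mid: "0 < k \<Longrightarrow> k \<le> n \<Longrightarrow> conf n d w k = w k" by (simp add: conf_def)
lemma conf_right: "1 \<le> n \<Longrightarrow> n \<le> k \<Longrightarrow> conf n d w k = w n + real_of_int (k - n) * d"
  by (cases "k = n") (auto simp: conf_def)

lemma conf_cong: "1 \<le> n \<Longrightarrow> (\<And>i. 1 \<le> i \<Longrightarrow> i \<le> n \<Longrightarrow> w i = w' i) \<Longrightarrow> conf n d w = conf n d w'"
  unfolding conf_def by (auto simp: fun_eq_iff)

lemma adm3:
  fixes y :: "int \<Rightarrow> real"
  assumes L: "\<And>i j. i \<le> j \<Longrightarrow> j \<le> 0 \<Longrightarrow> a * real_of_int (j - i) - C1 \<le> y j - y i"
    and Mi: "\<And>i j. 0 \<le> i \<Longrightarrow> i \<le> j \<Longrightarrow> j \<le> n \<Longrightarrow> a * real_of_int (j - i) - C2 \<le> y j - y i"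
    and R: "\<And>i j. n \<le> i \<Longrightarrow> i \<le> j \<Longrightarrow> a * real_of_int (j - i) \<le> y j - y i"
    and C: "0 \<le> C1" "0 \<le> C2" and n: "0 \<le> n"
  shows "adm a (C1 + C2) y"
  unfolding adm_def
proof (intro allI impI)
  fix i j :: int assume ij: "i \<le> j"
  have e1: "a * real_of_int (j - i) = a * real_of_int (j - 0) + a * real_of_int (0 - i)"
    by (simp add: algebra_simps)
  have e2: "a * real_of_int (j - i) = a * real_of_int (j - n) + a * real_of_int (n - i)"
    by (simp add: algebra_simps)
  have e3: "a * real_of_int (j - i) = a * real_of_int (j - n) + a * real_of_int (n - 0) + a * real_of_int (0 - i)"
    by (simp add: algebra_simps)
  show "a * real_of_int (j - i) - (C1 + C2) \<le> y j - y i"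
  proof (cases "j \<le> 0")
    case True then show ?thesis using L[OF ij True] C by linarith
  next
    case j0: False
    show ?thesis
    proof (cases "n \<le> i")
      case True then show ?thesis using R[OF True ij] C by linarith
    next
      case ni: False
      show ?thesis
      proof (cases "0 \<le> i")
        case i0: True
        show ?thesis
        proof (cases "j \<le> n")
          case True then show ?thesis using Mi[OF i0 ij True] C by linarith
        next
          case False
          then show ?thesis using Mi[of i n] R[of n j] i0 ni e2 C by (smt (verit))
        qed
      next
        case i0: False
        show ?thesis
        proof (cases "j \<le> n")
          case True then show ?thesis using Mi[of 0 j] L[of i 0] i0 j0 e1 C by (smt (verit))
        next
          case False
          then show ?thesis using Mi[of 0 n] L[of i 0] R[of n j] i0 n e3 C by (smt (verit))
        qed
      qed
    qed
  qed
qed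

lemma adm_conf:
  assumes n: "1 \<le> n" and d: "a \<le> d" and ab: "a \<le> b" and a: "0 < a"
    and K: "\<And>i. 1 \<le> i \<Longrightarrow> i \<le> n \<Longrightarrow> \<bar>w i\<bar> \<le> K"
  shows "adm a (b + (a * real_of_int n + 2 * (K + \<bar>x 0\<bar>))) (conf n d w)"
proof (rule adm3[where n=n])
  show "a * real_of_int (j - i) - b \<le> conf n d w j - conf n d w i" if "i \<le> j" "j \<le> 0" for i j
  proof -
    have "a * real_of_int (j - i) \<le> b * real_of_int (j - i)" using that ab by (intro mult_right_mono) auto
    thus ?thesis using x_left[OF that] that by (simp add: conf_left)
  qed
  have bnd: "\<bar>conf n d w k\<bar> \<le> K + \<bar>x 0\<bar>" if "0 \<le> k" "k \<le> n" for k
  proof (cases "k = 0")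
    case True
    have "0 \<le> K" using K[of n] n by force
    thus ?thesis using True by (simp add: conf_left)
  next
    case False
    have "\<bar>x 0\<bar> \<ge> 0" by simp
    thus ?thesis using False that K[of k] by (simp add: conf_mid)
  qed
  show "a * real_of_int (j - i) - (a * real_of_int n + 2 * (K + \<bar>x 0\<bar>)) \<le> conf n d w j - conf n d w i"
    if "0 \<le> i" "i \<le> j" "j \<le> n" for i j
  proof -
    have "a * real_of_int (j - i) \<le> a * real_of_int n" using that a by (intro mult_left_mono) auto
    thus ?thesis using bnd[of i] bnd[of j] that by (smt (verit, best) abs_le_iff)
  qed
  show "a * real_of_int (j - i) \<le> conf n d w j - conf n d w i" if "n \<le> i" "i \<le> j" for i j
  proof -
    have "a * real_of_int (j - i) \<le> d * real_of_int (j - i)" using that d by (intro mult_right_mono) auto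
    thus ?thesis using that n by (simp add: conf_right algebra_simps)
  qed
  show "0 \<le> b" using bpos by simp
  have "0 \<le> K" using K[of n] n by force
  thus "0 \<le> a * real_of_int n + 2 * (K + \<bar>x 0\<bar>)" using a n by simp
qed (use n in simp)

lemma adm_conf_ex:
  assumes n: "1 \<le> n" and d: "0 < d"
  shows "\<exists>a C. 0 < a \<and> adm a C (conf n d w)"
proof -
  define K where "K = (\<Sum>i\<in>{1..n}. \<bar>w i\<bar>)"
  have "\<bar>w i\<bar> \<le> K" if "1 \<le> i" "i \<le> n" for i
    unfolding K_def using that by (intro member_le_sum) auto
  hence "adm (min b d) (b + (min b d * real_of_int n + 2 * (K + \<bar>x 0\<bar>))) (conf n d w)"
    by (intro adm_conf[OF n]) (use bpos d in auto)
  moreover have "0 < min b d" using bpos d by simp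
  ultimately show ?thesis by (intro exI conjI)
qed

lemma conf_max:
  assumes n: "1 \<le> n" and dd: "d \<le> d'" and i: "0 \<le> i" "i \<le> n"
    and D: "0 \<le> conf n d w i - conf n d' w' i"
    and H: "\<And>j. 1 \<le> j \<Longrightarrow> j \<le> n \<Longrightarrow> w j - w' j \<le> conf n d w i - conf n d' w' i"
  shows "conf n d w k - conf n d' w' k \<le> conf n d w i - conf n d' w' i"
proof -
  consider "k \<le> 0" | "0 < k" "k \<le> n" | "n < k" by linarith
  then show ?thesis
  proof cases
    case 1 then show ?thesis using D by (simp add: conf_left)
  next
    case 2 then show ?thesis using H[of k] by (simp add: conf_mid)
  next
    case 3
    have "real_of_int (k - n) * d \<le> real_of_int (k - n) * d'" using 3 dd by (intro mult_left_mono) auto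
    moreover have "conf n d w k - conf n d' w' k = (w n - w' n) + (real_of_int (k - n) * d - real_of_int (k - n) * d')"
      using n 3 by (simp add: conf_right)
    ultimately show ?thesis using H[of n] n by linarith
  qed
qed

definition "sol n d w \<longleftrightarrow> (\<forall>i. 1 \<le> i \<and> i \<le> n \<longrightarrow> Nf (conf n d w) i = 0)"

lemma sol_mono:
  assumes n: "1 \<le> n" and d: "0 < d" "d \<le> d'" and s: "sol n d w" "sol n d' w'"
    and i: "1 \<le> i" "i \<le> n"
  shows "w i \<le> w' i"
proof -
  define \<delta> where "\<delta> k = conf n d w k - conf n d' w' k" for k
  define D where "D = Max (\<delta> ` {0..n})"
  have fin: "finite (\<delta> ` {0..n})" by simp
  have ne: "\<delta> ` {0..n} \<noteq> {}" using n by auto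
  obtain i0 where i0: "i0 \<in> {0..n}" "\<delta> i0 = D" using Max_in[OF fin ne] unfolding D_def by auto
  have le: "\<delta> k \<le> D" if "k \<in> {0..n}" for k unfolding D_def using fin that by auto
  have D0: "0 \<le> D" using le[of 0] n by (simp add: \<delta>_def conf_left)
  have "D \<le> 0"
  proof (rule ccontr)
    assume "\<not> D \<le> 0"
    hence Dp: "0 < D" by simp
    have i01: "1 \<le> i0" using i0 Dp by (cases "i0 = 0") (auto simp: \<delta>_def conf_left)
    obtain a C where aC: "0 < a" "adm a C (conf n d w)" using adm_conf_ex[OF n d(1)] by blast
    obtain a' C' where aC': "0 < a'" "adm a' C' (conf n d' w')" using adm_conf_ex[OF n, of d' w'] d by auto
    have all: "\<forall>k. conf n d w k - conf n d' w' k \<le> conf n d w i0 - conf n d' w' i0"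
    proof
      fix k
      show "conf n d w k - conf n d' w' k \<le> conf n d w i0 - conf n d' w' i0"
      proof (rule conf_max[OF n d(2)])
        show "0 \<le> i0" "i0 \<le> n" using i0 by auto
        show "0 \<le> conf n d w i0 - conf n d' w' i0" using D0 i0 by (simp add: \<delta>_def)
        fix j assume "1 \<le> j" "j \<le> n"
        thus "w j - w' j \<le> conf n d w i0 - conf n d' w' i0"
          using le[of j] i0 by (simp add: \<delta>_def conf_mid)
      qed
    qed
    have strict: "conf n d w 0 - conf n d' w' 0 < conf n d w i0 - conf n d' w' i0"
      using Dp i0 by (simp add: \<delta>_def conf_left)
    have "Nf (conf n d w) i0 < Nf (conf n d' w') i0"
      by (rule cmp_strict[OF aC(1) aC'(1) aC(2) aC'(2) all strict])
    moreover have "Nf (conf n d w) i0 = 0" "Nf (conf n d' w') i0 = 0"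
      using s i0 i01 unfolding sol_def by auto
    ultimately show False by simp
  qed
  thus ?thesis using le[of i] i by (simp add: \<delta>_def conf_mid)
qed

end

context eqsetup begin

lemma G_ge: "cc - t \<le> G t"
proof -
  have "0 < F (max cc t)" using Fpos cc_pos by (simp add: less_max_iff_disj)
  thus ?thesis unfolding G_def by linarith
qed

lemma Rf_lin:
  assumes "\<And>k. i \<le> k \<Longrightarrow> y k = p + real_of_int k * d"
  shows "Rf y i = (\<Sum>j. G (d * (real j + 1)))"
  unfolding Rf_def by (rule suminf_cong) (simp add: assms algebra_simps)

lemma conf_lin:
  assumes n: "1 \<le> n" and w: "\<And>i. 1 \<le> i \<Longrightarrow> i \<le> n \<Longrightarrow> w i = p + real_of_int i * d" and k: "1 \<le> k"
  shows "conf n d w k = p + real_of_int k * d"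
proof (cases "k \<le> n")
  case True then show ?thesis using w k by (simp add: conf_mid)
next
  case False then show ?thesis using w[of n] n by (simp add: conf_right algebra_simps)
qed

lemma conf_tendsto:
  assumes n: "1 \<le> n" and v: "\<And>j. (\<lambda>k. v k j) \<longlonglongrightarrow> u j" and dd: "dk \<longlonglongrightarrow> dl"
  shows "(\<lambda>k. conf n (dk k) (v k) j) \<longlonglongrightarrow> conf n dl u j"
proof -
  consider "j \<le> 0" | "0 < j" "j \<le> n" | "n < j" by linarith
  then show ?thesis
  proof cases
    case 1 then show ?thesis by (simp add: conf_left)
  next
    case 2 then show ?thesis using v by (simp add: conf_mid)
  next
    case 3 then show ?thesis using n by (simp add: conf_right) (intro tendsto_intros v dd)
  qed
qed

lemma perron:
  assumes n: "1 \<le> n" and d: "0 < d"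
  shows "\<exists>w. sol n d w"
proof -
  define S where "S = (\<Sum>j. G (d * (real j + 1)))"
  have Ssum: "summable (\<lambda>j. G (d * (real j + 1)))"
  proof -
    have "hb d 0 = (\<lambda>j. G (d * (real j + 1)))" by (simp add: fun_eq_iff hb_def)
    thus ?thesis using summable_hb[OF d, of 0] by simp
  qed
  have S0: "0 \<le> S" unfolding S_def using Ssum G_pos by (intro suminf_nonneg) (auto intro: less_imp_le)
  have nd: "0 < real_of_int n * d" using n d by simp
  define K1 where "K1 = S + real_of_int n * d + \<bar>x 0\<bar>"
  define lo where "lo i = - K1 + real_of_int i * d" for i
  define eps where "eps = G (real_of_int n * d)"
  have eps: "0 < eps" unfolding eps_def by (rule G_pos)
  obtain N0 where N0: "\<And>N. N \<ge> N0 \<Longrightarrow> norm (\<Sum>r. F (b * (real (r + N) + 1))) < eps"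
    using suminf_exist_split[OF eps summable_Fe[OF bpos]] by auto
  define N where "N = max N0 (nat \<lceil>cc / b\<rceil>)"
  have Nb: "cc \<le> b * (real N + 1)"
  proof -
    have "cc / b \<le> real N" unfolding N_def by linarith
    hence "cc \<le> b * real N" using bpos by (simp add: field_simps)
    thus ?thesis using bpos by (simp add: algebra_simps)
  qed
  have tail: "(\<Sum>r. F (b * (real (r + N) + 1))) < eps"
    using N0[of N] unfolding N_def by simp
  define K2 where "K2 = \<bar>x 0\<bar> + b * (real N + 1) + b"
  define hi where "hi i = K2 + real_of_int i * d" for i
  have K1: "0 \<le> K1" unfolding K1_def using S0 nd by simp
  have K2: "0 \<le> K2" unfolding K2_def using bpos by simp
  define Kb where "Kb = K1 + K2 + real_of_int n * d"
  define a0 where "a0 = min b d"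
  define C0 where "C0 = b + (a0 * real_of_int n + 2 * (Kb + \<bar>x 0\<bar>))"
  have a0: "0 < a0" unfolding a0_def using bpos d by simp
  have box_adm: "adm a0 C0 (conf n d w)"
    if "\<And>i. 1 \<le> i \<Longrightarrow> i \<le> n \<Longrightarrow> lo i \<le> w i \<and> w i \<le> hi i" for w
    unfolding C0_def
  proof (rule adm_conf[OF n])
    fix i assume i: "1 \<le> i" "i \<le> n"
    have "real_of_int i * d \<le> real_of_int n * d" using i d by (intro mult_right_mono) auto
    moreover have "0 \<le> real_of_int i * d" using i d by simp
    ultimately show "\<bar>w i\<bar> \<le> Kb" using that[OF i] K1 K2 unfolding lo_def hi_def Kb_def by linarith
  qed (use a0 in \<open>auto simp: a0_def\<close>)
  have lo_adm: "adm a0 C0 (conf n d lo)" by (rule box_adm) (use K1 K2 in \<open>auto simp: lo_def hi_def\<close>)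
  have hi_adm: "adm a0 C0 (conf n d hi)" by (rule box_adm) (use K1 K2 in \<open>auto simp: lo_def hi_def\<close>)
  have sub: "0 \<le> Nf (conf n d lo) i" if i: "1 \<le> i" "i \<le> n" for i
  proof -
    have y: "conf n d lo k = - K1 + real_of_int k * d" if "1 \<le> k" for k
      by (rule conf_lin[OF n _ that]) (simp add: lo_def)
    have R: "Rf (conf n d lo) i = S" unfolding S_def by (rule Rf_lin[of i _ "-K1"]) (use i y in auto)
    define j0 where "j0 = nat (i - 1)"
    have j0: "i - 1 - int j0 = 0" using i unfolding j0_def by simp
    have eq: "conf n d lo i - conf n d lo (i - 1 - int j0) = - K1 + real_of_int i * d - x 0"
      using j0 y[of i] i by (simp add: conf_left)
    have "G (conf n d lo i - conf n d lo (i - 1 - int j0)) \<le> Lf (conf n d lo) i"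
      unfolding Lf_def using sum_le_suminf[OF summable_L[OF a0 lo_adm], of "{j0}" i] G_pos
      by (auto intro: less_imp_le)
    hence "G (- K1 + real_of_int i * d - x 0) \<le> Lf (conf n d lo) i" unfolding eq .
    moreover have "real_of_int i * d \<le> real_of_int n * d" using i d by (intro mult_right_mono) auto
    moreover have "cc - (- K1 + real_of_int i * d - x 0) \<ge> S"
      using \<open>real_of_int i * d \<le> real_of_int n * d\<close> cc_pos unfolding K1_def by linarith
    ultimately have "S \<le> Lf (conf n d lo) i" using G_ge[of "- K1 + real_of_int i * d - x 0"] by linarith
    thus ?thesis using R unfolding Nf_def by simp
  qed
  have super: "Nf (conf n d hi) i \<le> 0" if i: "1 \<le> i" "i \<le> n" for i
  proof -
    have y: "conf n d hi k = K2 + real_of_int k * d" if "1 \<le> k" for k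
      by (rule conf_lin[OF n _ that]) (simp add: hi_def)
    have R: "Rf (conf n d hi) i = S" unfolding S_def by (rule Rf_lin[of i _ K2]) (use i y in auto)
    define p where "p = nat (i - 1)"
    have ip: "i = int p + 1" using i unfolding p_def by simp
    define f where "f j = G (conf n d hi i - conf n d hi (i - 1 - int j))" for j
    define s where "s j = G (d * (real j + 1))" for j
    have fsum: "summable f" unfolding f_def by (rule summable_L[OF a0 hi_adm])
    have ssum: "summable s" unfolding s_def by (rule Ssum)
    have head: "(\<Sum>j<p. f j) = (\<Sum>j<p. s j)"
    proof (rule sum.cong)
      fix j assume "j \<in> {..<p}"
      hence j: "int j < int p" by simp
      have "conf n d hi i - conf n d hi (i - 1 - int j) = d * (real j + 1)"
        using y[of i] y[of "i - 1 - int j"] j ip by (simp add: algebra_simps)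
      thus "f j = s j" unfolding f_def s_def by simp
    qed simp
    have ftail: "f (r + p) \<le> F (b * (real (r + N) + 1))" for r
    proof -
      have idx: "i - 1 - int (r + p) = - int r" using ip by simp
      have xl: "b * real_of_int (0 - (- int r)) - b \<le> x 0 - x (- int r)" by (rule x_left) auto
      have xl': "b * real r - b \<le> x 0 - x (- int r)" using xl by simp
      have di: "0 \<le> real_of_int i * d" using d i by simp
      have e: "b * (real (r + N) + 1) = b * real r + b * real N + b" by (simp add: algebra_simps)
      have "b * (real (r + N) + 1) \<le> K2 + real_of_int i * d - x (- int r)"
        unfolding e K2_def using xl' di abs_ge_self[of "x 0"] distrib_left[of b "real N" 1] by linarith
      hence "G (K2 + real_of_int i * d - x (- int r)) \<le> G (b * (real (r + N) + 1))" by (rule G_mono)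
      also have "\<dots> = F (b * (real (r + N) + 1))"
        by (rule G_F) (use Nb bpos in \<open>auto intro: order_trans intro!: mult_left_mono\<close>)
      finally show ?thesis unfolding f_def idx using y[of i] i by (simp add: conf_left)
    qed
    have "(\<Sum>r. f (r + p)) \<le> (\<Sum>r. F (b * (real (r + N) + 1)))"
    proof (rule suminf_le[OF ftail])
      show "summable (\<lambda>r. f (r + p))" using fsum by (simp only: summable_iff_shift)
      show "summable (\<lambda>r. F (b * (real (r + N) + 1)))"
        using summable_Fe[OF bpos] summable_iff_shift[of "\<lambda>r. F (b * (real r + 1))" N] by simp
    qed
    also have "\<dots> < eps" by (rule tail)
    also have "eps \<le> s (0 + p)"
    proof -
      have "real p + 1 \<le> real_of_int n" using ip i by simp
      hence "d * (real p + 1) \<le> d * real_of_int n" using d by (intro mult_left_mono) auto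
      hence "d * (real p + 1) \<le> real_of_int n * d" by (simp add: mult.commute)
      thus ?thesis unfolding eps_def s_def by (simp add: G_mono)
    qed
    also have "s (0 + p) \<le> (\<Sum>r. s (r + p))"
    proof -
      have "summable (\<lambda>r. s (r + p))" using ssum by (simp only: summable_iff_shift)
      from sum_le_suminf[OF this, of "{0}"] show ?thesis using G_pos by (auto simp: s_def intro: less_imp_le)
    qed
    finally have "(\<Sum>r. f (r + p)) \<le> (\<Sum>r. s (r + p))" by simp
    hence "Lf (conf n d hi) i \<le> S"
      unfolding Lf_def S_def using suminf_split_initial_segment[OF fsum, of p]
        suminf_split_initial_segment[OF ssum, of p] head unfolding f_def s_def by linarith
    thus ?thesis using R unfolding Nf_def by simp
  qed
  define P where "P = {w. (\<forall>i. 1 \<le> i \<and> i \<le> n \<longrightarrow> lo i \<le> w i \<and> w i \<le> hi i) \<and>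
                          (\<forall>i. 1 \<le> i \<and> i \<le> n \<longrightarrow> 0 \<le> Nf (conf n d w) i)}"
  define ws where "ws i = (SUP w\<in>P. w i)" for i
  have loP: "lo \<in> P" unfolding P_def using sub K1 K2 by (auto simp: lo_def hi_def)
  hence Pne: "P \<noteq> {}" by auto
  have bdd: "bdd_above ((\<lambda>w. w i) ` P)" if "1 \<le> i" "i \<le> n" for i
    using that unfolding P_def bdd_above_def by auto
  have ws_ge: "w i \<le> ws i" if "w \<in> P" "1 \<le> i" "i \<le> n" for w i
    unfolding ws_def by (rule cSUP_upper[OF that(1) bdd[OF that(2,3)]])
  have ws_le: "ws i \<le> hi i" if "1 \<le> i" "i \<le> n" for i
    unfolding ws_def by (rule cSUP_least[OF Pne]) (use that in \<open>auto simp: P_def\<close>)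
  have ws_box: "lo i \<le> ws i \<and> ws i \<le> hi i" if "1 \<le> i" "i \<le> n" for i
    using ws_ge[OF loP that] ws_le[OF that] by simp
  have ws_adm: "adm a0 C0 (conf n d ws)" by (rule box_adm) (use ws_box in auto)
  have claim1: "0 \<le> Nf (conf n d ws) i" if i: "1 \<le> i" "i \<le> n" for i
  proof -
    have "\<forall>k. \<exists>w\<in>P. ws i - inverse (real (Suc k)) < w i"
    proof
      fix k
      have "ws i - inverse (real (Suc k)) < ws i" by simp
      thus "\<exists>w\<in>P. ws i - inverse (real (Suc k)) < w i"
        using less_cSUP_iff[OF Pne bdd[OF i]] unfolding ws_def by blast
    qed
    then obtain W where W: "\<And>k. W k \<in> P" "\<And>k. ws i - inverse (real (Suc k)) < W k i"
      by metis
    define v where "v k = ws(i := W k i)" for k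
    have v_box: "lo j \<le> v k j \<and> v k j \<le> hi j" if "1 \<le> j" "j \<le> n" for j k
      using ws_box[OF that] W(1)[of k] that unfolding v_def P_def by auto
    have v_adm: "adm a0 C0 (conf n d (v k))" for k by (rule box_adm) (use v_box in auto)
    have Wadm: "adm a0 C0 (conf n d (W k))" for k by (rule box_adm) (use W(1) in \<open>auto simp: P_def\<close>)
    have ge: "0 \<le> Nf (conf n d (v k)) i" for k
    proof -
      have "Nf (conf n d (W k)) i \<le> Nf (conf n d (v k)) i"
      proof (rule cmp[OF a0 a0 Wadm v_adm], rule allI)
        fix l
        show "conf n d (W k) l - conf n d (v k) l \<le> conf n d (W k) i - conf n d (v k) i"
        proof (rule conf_max[OF n order_refl])
          show "0 \<le> i" "i \<le> n" using i by auto
          show "0 \<le> conf n d (W k) i - conf n d (v k) i" using i by (simp add: conf_mid v_def)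
          fix j assume j: "1 \<le> j" "j \<le> n"
          show "W k j - v k j \<le> conf n d (W k) i - conf n d (v k) i"
            using ws_ge[OF W(1) j] i by (simp add: conf_mid v_def)
        qed
      qed
      moreover have "0 \<le> Nf (conf n d (W k)) i" using W(1)[of k] i unfolding P_def by auto
      ultimately show ?thesis by linarith
    qed
    have Wlim: "(\<lambda>k. W k i) \<longlonglongrightarrow> ws i"
    proof (rule tendsto_sandwich[of "\<lambda>k. ws i - inverse (real (Suc k))" _ _ "\<lambda>k. ws i"])
      show "\<forall>\<^sub>F k in sequentially. ws i - inverse (real (Suc k)) \<le> W k i"
        using W(2) by (intro always_eventually allI less_imp_le) 
      show "\<forall>\<^sub>F k in sequentially. W k i \<le> ws i" using ws_ge[OF W(1) i] by (intro always_eventually allI)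
      show "(\<lambda>k. ws i - inverse (real (Suc k))) \<longlonglongrightarrow> ws i"
        using tendsto_diff[OF tendsto_const LIMSEQ_inverse_real_of_nat, of "ws i"] by simp
    qed simp
    have vlim: "(\<lambda>k. v k j) \<longlonglongrightarrow> ws j" for j
      using Wlim by (cases "j = i") (auto simp: v_def)
    have "(\<lambda>k. Nf (conf n d (v k)) i) \<longlonglongrightarrow> Nf (conf n d ws) i"
      by (rule Nf_tendsto[OF a0 v_adm]) (rule conf_tendsto[OF n vlim tendsto_const])
    thus ?thesis using ge by (intro LIMSEQ_le_const) auto
  qed
  have claim2: "Nf (conf n d ws) i \<le> 0" if i: "1 \<le> i" "i \<le> n" for i
  proof (rule ccontr)
    assume "\<not> Nf (conf n d ws) i \<le> 0"
    hence pos: "0 < Nf (conf n d ws) i" by simp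
    have lt: "ws i < hi i"
    proof (rule ccontr)
      assume "\<not> ws i < hi i"
      hence eq: "ws i = hi i" using ws_le[OF i] by simp
      have "Nf (conf n d ws) i \<le> Nf (conf n d hi) i"
      proof (rule cmp[OF a0 a0 ws_adm hi_adm], rule allI)
        fix l
        show "conf n d ws l - conf n d hi l \<le> conf n d ws i - conf n d hi i"
        proof (rule conf_max[OF n order_refl])
          show "0 \<le> i" "i \<le> n" using i by auto
          show "0 \<le> conf n d ws i - conf n d hi i" using i eq by (simp add: conf_mid)
          fix j assume j: "1 \<le> j" "j \<le> n"
          show "ws j - hi j \<le> conf n d ws i - conf n d hi i"
            using ws_le[OF j] i eq by (simp add: conf_mid)
        qed
      qed
      thus False using super[OF i] pos by linarith
    qed
    define v where "v k = ws(i := ws i + (hi i - ws i) * inverse (real (Suc k)))" for k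
    have eta: "0 < (hi i - ws i) * inverse (real (Suc k))" for k using lt by simp
    have eta2: "(hi i - ws i) * inverse (real (Suc k)) \<le> hi i - ws i" for k
    proof -
      have "inverse (real (Suc k)) \<le> 1" by (simp add: inverse_le_1_iff)
      thus ?thesis using lt by (simp add: mult_left_le)
    qed
    have v_box: "lo j \<le> v k j \<and> v k j \<le> hi j" if "1 \<le> j" "j \<le> n" for j k
      using ws_box[OF that] eta[of k] eta2[of k] unfolding v_def by auto
    have v_adm: "adm a0 C0 (conf n d (v k))" for k by (rule box_adm) (use v_box in auto)
    have vlim: "(\<lambda>k. v k j) \<longlonglongrightarrow> ws j" for j
    proof (cases "j = i")
      case True
      have "(\<lambda>k. ws i + (hi i - ws i) * inverse (real (Suc k))) \<longlonglongrightarrow> ws i + (hi i - ws i) * 0"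
        by (intro tendsto_intros LIMSEQ_inverse_real_of_nat)
      thus ?thesis using True by (simp add: v_def)
    qed (simp add: v_def)
    have "(\<lambda>k. Nf (conf n d (v k)) i) \<longlonglongrightarrow> Nf (conf n d ws) i"
      by (rule Nf_tendsto[OF a0 v_adm]) (rule conf_tendsto[OF n vlim tendsto_const])
    from order_tendstoD(1)[OF this pos] obtain k where k: "0 < Nf (conf n d (v k)) i"
      by (auto simp: eventually_sequentially)
    have "v k \<in> P"
      unfolding P_def
    proof (intro CollectI conjI allI impI)
      fix j assume j: "1 \<le> j \<and> j \<le> n"
      show "lo j \<le> v k j" "v k j \<le> hi j" using v_box j by auto
      show "0 \<le> Nf (conf n d (v k)) j"
      proof (cases "j = i")
        case True then show ?thesis using k by simp
      next
        case False
        have "Nf (conf n d ws) j \<le> Nf (conf n d (v k)) j"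
        proof (rule cmp[OF a0 a0 ws_adm v_adm], rule allI)
          fix l
          show "conf n d ws l - conf n d (v k) l \<le> conf n d ws j - conf n d (v k) j"
          proof (rule conf_max[OF n order_refl])
            show "0 \<le> j" "j \<le> n" using j by auto
            show "0 \<le> conf n d ws j - conf n d (v k) j" using j False by (simp add: conf_mid v_def)
            fix l assume l: "1 \<le> l" "l \<le> n"
            show "ws l - v k l \<le> conf n d ws j - conf n d (v k) j"
              using j False eta[of k] by (simp add: conf_mid v_def)
          qed
        qed
        thus ?thesis using claim1[of j] j by linarith
      qed
    qed
    hence "v k i \<le> ws i" using ws_ge i by blast
    thus False using eta[of k] by (simp add: v_def)
  qed
  have "sol n d ws" unfolding sol_def using claim1 claim2 by (auto intro: order_antisym)
  thus ?thesis by blast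
qed

end

context eqsetup begin

lemma adm_gaps:
  assumes "\<And>k. a \<le> y (k + 1) - y k"
  shows "adm a 0 y"
  unfolding adm_def
proof (intro allI impI)
  fix i j :: int assume "i \<le> j"
  have "a * real_of_int (j - i) \<le> y j - y i"
    by (rule gap_sum_ge[OF _ \<open>i \<le> j\<close>]) (use assms[of "_ - 1"] in auto)
  thus "a * real_of_int (j - i) - 0 \<le> y j - y i" by simp
qed

lemma conf_gap_right: "1 \<le> n \<Longrightarrow> n \<le> k \<Longrightarrow> conf n d w (k + 1) - conf n d w k = d"
  by (simp add: conf_right algebra_simps)

lemma conf_gap_left: "k \<le> -1 \<Longrightarrow> conf n d w (k + 1) - conf n d w k = x (k + 1) - x k"
  by (simp add: conf_left)

lemma gap_lower:
  assumes n: "1 \<le> n" and d: "0 < d" and s: "sol n d w" and N0: "0 \<le> Nf (conf n d w) 0"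
  shows "mg \<le> conf n d w (k + 1) - conf n d w k"
proof -
  define y where "y = conf n d w"
  define g where "g k = y (k + 1) - y k" for k
  define \<mu> where "\<mu> = Min (g ` {0..n})"
  have fin: "finite (g ` {0..n})" by simp
  have ne: "g ` {0..n} \<noteq> {}" using n by auto
  obtain i where i: "i \<in> {0..n}" "g i = \<mu>" using Min_in[OF fin ne] unfolding \<mu>_def by auto
  have le: "\<mu> \<le> g k" if "k \<in> {0..n}" for k unfolding \<mu>_def using fin that by auto
  have gr: "g k = d" if "n \<le> k" for k unfolding g_def y_def using conf_gap_right[OF n that] .
  have gl: "mg \<le> g k" if "k \<le> -1" for k
    unfolding g_def y_def using conf_gap_left[OF that] xgap_mg[of "k+1"] that by simp
  have "mg \<le> \<mu>"
  proof (rule ccontr)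
    assume "\<not> mg \<le> \<mu>"
    hence mu: "\<mu> < mg" by simp
    have all: "\<mu> \<le> g k" for k
    proof -
      consider "k \<le> -1" | "k \<in> {0..n}" | "n < k" by force
      then show ?thesis
      proof cases
        case 1 then show ?thesis using gl[OF 1] mu by simp
      next
        case 2 then show ?thesis by (rule le)
      next
        case 3 then show ?thesis using gr[of k] gr[of n] le[of n] n by auto
      qed
    qed
    obtain a C where aC: "0 < a" "adm a C y" using adm_conf_ex[OF n d] unfolding y_def by blast
    have sol': "Nf y j = 0" if "1 \<le> j" "j \<le> n" for j using s that unfolding sol_def y_def by auto
    show False
    proof (cases "i < n")
      case True
      define z where "z k = y (k + 1) + (- \<mu>)" for k
      have zadm: "adm a C z" unfolding z_def by (rule adm_shift[OF aC(2)])
      have "Nf y i < Nf z i"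
      proof (rule cmp_strict[OF aC(1) aC(1) aC(2) zadm])
        show "\<forall>j. y j - z j \<le> y i - z i"
        proof
          fix j show "y j - z j \<le> y i - z i" using all[of j] i by (simp add: z_def g_def)
        qed
        show "y (-1) - z (-1) < y i - z i" using gl[of "-1"] mu i by (simp add: z_def g_def)
      qed
      also have "Nf z i = Nf y (i + 1)" unfolding z_def by (rule Nf_shift)
      also have "\<dots> = 0" using sol'[of "i+1"] i True by auto
      finally have "Nf y i < 0" .
      moreover have "0 \<le> Nf y i"
        using N0 sol'[of i] i unfolding y_def by (cases "i = 0") auto
      ultimately show False by simp
    next
      case False
      hence iN: "i = n" using i by simp
      hence mud: "\<mu> = d" using gr[of n] i by simp
      define u where "u k = (y n - real_of_int n * d) + real_of_int k * d" for k
      have uadm: "adm d 0 u" by (rule adm_gaps) (simp add: u_def algebra_simps)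
      have ygap: "d * real_of_int (n - j) \<le> y n - y j" if "j \<le> n" for j
        by (rule gap_sum_ge[OF _ that]) (use all[of "_ - 1"] mud in \<open>auto simp: g_def\<close>)
      have "Nf y n < Nf u n"
      proof (rule cmp_strict[OF aC(1) d aC(2) uadm])
        show "\<forall>j. y j - u j \<le> y n - u n"
        proof
          fix j
          show "y j - u j \<le> y n - u n"
          proof (cases "j \<le> n")
            case True then show ?thesis using ygap[OF True] by (simp add: u_def algebra_simps)
          next
            case False then show ?thesis using n by (simp add: u_def y_def conf_right algebra_simps)
          qed
        qed
        have "y 0 - y (-1) > d" using gl[of "-1"] mu mud by (simp add: g_def)
        moreover have "d * real_of_int n \<le> y n - y 0" using ygap[of 0] n by simp
        ultimately show "y (-1) - u (-1) < y n - u n" by (simp add: u_def algebra_simps)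
      qed
      moreover have "Nf u n = 0" unfolding u_def by (rule Nf_uniform)
      moreover have "Nf y n = 0" using sol'[of n] n by simp
      ultimately show False by simp
    qed
  qed
  show ?thesis
  proof -
    consider "k \<le> -1" | "k \<in> {0..n}" | "n < k" by force
    then show ?thesis
    proof cases
      case 1 then show ?thesis using gl[OF 1] by (simp add: g_def y_def)
    next
      case 2 then show ?thesis using le[OF 2] \<open>mg \<le> \<mu>\<close> by (simp add: g_def y_def)
    next
      case 3 then show ?thesis using gr[of k] gr[of n] le[of n] n \<open>mg \<le> \<mu>\<close> by (auto simp: g_def y_def)
    qed
  qed
qed

lemma gap_upper:
  assumes n: "1 \<le> n" and d: "0 < d" and s: "sol n d w" and N0: "Nf (conf n d w) 0 \<le> 0"
  shows "conf n d w (k + 1) - conf n d w k \<le> Mg"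
proof -
  define y where "y = conf n d w"
  define g where "g k = y (k + 1) - y k" for k
  define \<mu> where "\<mu> = Max (g ` {0..n})"
  have fin: "finite (g ` {0..n})" by simp
  have ne: "g ` {0..n} \<noteq> {}" using n by auto
  obtain i where i: "i \<in> {0..n}" "g i = \<mu>" using Max_in[OF fin ne] unfolding \<mu>_def by auto
  have le: "g k \<le> \<mu>" if "k \<in> {0..n}" for k unfolding \<mu>_def using fin that by auto
  have gr: "g k = d" if "n \<le> k" for k unfolding g_def y_def using conf_gap_right[OF n that] .
  have gl: "g k \<le> Mg" if "k \<le> -1" for k
    unfolding g_def y_def using conf_gap_left[OF that] xgap_Mg[of "k+1"] that by simp
  have "\<mu> \<le> Mg"
  proof (rule ccontr)
    assume "\<not> \<mu> \<le> Mg"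
    hence mu: "Mg < \<mu>" by simp
    have all: "g k \<le> \<mu>" for k
    proof -
      consider "k \<le> -1" | "k \<in> {0..n}" | "n < k" by force
      then show ?thesis
      proof cases
        case 1 then show ?thesis using gl[OF 1] mu by simp
      next
        case 2 then show ?thesis by (rule le)
      next
        case 3 then show ?thesis using gr[of k] gr[of n] le[of n] n by auto
      qed
    qed
    obtain a C where aC: "0 < a" "adm a C y" using adm_conf_ex[OF n d] unfolding y_def by blast
    have sol': "Nf y j = 0" if "1 \<le> j" "j \<le> n" for j using s that unfolding sol_def y_def by auto
    show False
    proof (cases "i < n")
      case True
      define z where "z k = y (k + 1) + (- \<mu>)" for k
      have zadm: "adm a C z" unfolding z_def by (rule adm_shift[OF aC(2)])
      have "Nf z i < Nf y i"
      proof (rule cmp_strict[OF aC(1) aC(1) zadm aC(2)])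
        show "\<forall>j. z j - y j \<le> z i - y i"
        proof
          fix j show "z j - y j \<le> z i - y i" using all[of j] i by (simp add: z_def g_def)
        qed
        show "z (-1) - y (-1) < z i - y i" using gl[of "-1"] mu i by (simp add: z_def g_def)
      qed
      moreover have "Nf z i = Nf y (i + 1)" unfolding z_def by (rule Nf_shift)
      moreover have "Nf y (i + 1) = 0" using sol'[of "i+1"] i True by auto
      moreover have "Nf y i \<le> 0"
        using N0 sol'[of i] i unfolding y_def by (cases "i = 0") auto
      ultimately show False by simp
    next
      case False
      hence iN: "i = n" using i by simp
      hence mud: "\<mu> = d" using gr[of n] i by simp
      define u where "u k = (y n - real_of_int n * d) + real_of_int k * d" for k
      have uadm: "adm d 0 u" by (rule adm_gaps) (simp add: u_def algebra_simps)
      have ygap: "y n - y j \<le> d * real_of_int (n - j)" if "j \<le> n" for j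
        by (rule gap_sum_le[OF _ that]) (use all[of "_ - 1"] mud in \<open>auto simp: g_def\<close>)
      have "Nf u n < Nf y n"
      proof (rule cmp_strict[OF d aC(1) uadm aC(2)])
        show "\<forall>j. u j - y j \<le> u n - y n"
        proof
          fix j
          show "u j - y j \<le> u n - y n"
          proof (cases "j \<le> n")
            case True then show ?thesis using ygap[OF True] by (simp add: u_def algebra_simps)
          next
            case False then show ?thesis using n by (simp add: u_def y_def conf_right algebra_simps)
          qed
        qed
        have "y 0 - y (-1) < d" using gl[of "-1"] mu mud by (simp add: g_def)
        moreover have "y n - y 0 \<le> d * real_of_int n" using ygap[of 0] n by simp
        ultimately show "u (-1) - y (-1) < u n - y n" by (simp add: u_def algebra_simps)
      qed
      moreover have "Nf u n = 0" unfolding u_def by (rule Nf_uniform)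
      moreover have "Nf y n = 0" using sol'[of n] n by simp
      ultimately show False by simp
    qed
  qed
  show ?thesis
  proof -
    consider "k \<le> -1" | "k \<in> {0..n}" | "n < k" by force
    then show ?thesis
    proof cases
      case 1 then show ?thesis using gl[OF 1] by (simp add: g_def y_def)
    next
      case 2 then show ?thesis using le[OF 2] \<open>\<mu> \<le> Mg\<close> by (simp add: g_def y_def)
    next
      case 3 then show ?thesis using gr[of k] gr[of n] le[of n] n \<open>\<mu> \<le> Mg\<close> by (auto simp: g_def y_def)
    qed
  qed
qed

end

context eqsetup begin

lemma finite_stage:
  assumes n: "1 \<le> n"
  shows "\<exists>y. (\<forall>k\<le>0. y k = x k) \<and> (\<forall>k. mg \<le> y (k + 1) - y k \<and> y (k + 1) - y k \<le> Mg) \<and>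
             (\<forall>i. 0 \<le> i \<and> i \<le> n \<longrightarrow> Nf y i = 0)"
proof -
  define sw where "sw d = (SOME w. sol n d w)" for d
  have sw: "sol n d (sw d)" if "0 < d" for d
    unfolding sw_def using perron[OF n that] by (rule someI_ex)
  have swmono: "sw d i \<le> sw d' i" if "0 < d" "d \<le> d'" "1 \<le> i" "i \<le> n" for d d' i
    using sol_mono[OF n that(1,2) sw sw that(3,4)] that by auto
  define \<phi> where "\<phi> d = Nf (conf n d (sw d)) 0" for d
  have phi_mono: "\<phi> d \<le> \<phi> d'" if dd: "0 < d" "d \<le> d'" for d d'
  proof -
    have d': "0 < d'" using dd by simp
    obtain a C where aC: "0 < a" "adm a C (conf n d (sw d))" using adm_conf_ex[OF n dd(1)] by blast
    obtain a' C' where aC': "0 < a'" "adm a' C' (conf n d' (sw d'))" using adm_conf_ex[OF n d'] by blast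
    show ?thesis unfolding \<phi>_def
    proof (rule cmp[OF aC(1) aC'(1) aC(2) aC'(2)], rule allI)
      fix k
      show "conf n d (sw d) k - conf n d' (sw d') k \<le> conf n d (sw d) 0 - conf n d' (sw d') 0"
      proof (rule conf_max[OF n dd(2)])
        fix j assume j: "1 \<le> j" "j \<le> n"
        thus "sw d j - sw d' j \<le> conf n d (sw d) 0 - conf n d' (sw d') 0"
          using swmono[OF dd j] by (simp add: conf_left)
      qed (use n in \<open>auto simp: conf_left\<close>)
    qed
  qed
  have phi_neg: "\<phi> d < 0" if "0 < d" "d < mg" for d
  proof (rule ccontr)
    assume "\<not> \<phi> d < 0"
    hence "mg \<le> conf n d (sw d) (n + 1) - conf n d (sw d) n"
      using gap_lower[OF n that(1) sw[OF that(1)]] unfolding \<phi>_def by auto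
    thus False using conf_gap_right[OF n order_refl, of d "sw d"] that by simp
  qed
  have phi_pos: "0 < \<phi> d" if "Mg < d" for d
  proof (rule ccontr)
    have d: "0 < d" using that mg_le_Mg mg_pos by simp
    assume "\<not> 0 < \<phi> d"
    hence "conf n d (sw d) (n + 1) - conf n d (sw d) n \<le> Mg"
      using gap_upper[OF n d sw[OF d]] unfolding \<phi>_def by auto
    thus False using conf_gap_right[OF n order_refl, of d "sw d"] that by simp
  qed
  have core: "(\<lambda>k. \<phi> (dk k)) \<longlonglongrightarrow> \<phi> dl"
    if lim: "dk \<longlonglongrightarrow> dl" and dl: "0 < dl" and half: "\<And>k. dl / 2 \<le> dk k"
      and mono: "incseq dk \<or> decseq dk" for dk dl
  proof -
    have dkpos: "0 < dk k" for k using half[of k] dl by linarith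
    define K where "K = (\<Sum>i\<in>{1..n}. \<bar>sw (dk 0) i\<bar> + \<bar>sw dl i\<bar>)"
    have conv: "\<exists>L. (\<lambda>k. sw (dk k) i) \<longlonglongrightarrow> L" and bnd: "\<forall>k. \<bar>sw (dk k) i\<bar> \<le> K"
      if i: "1 \<le> i" "i \<le> n" for i
    proof -
      have Ki: "\<bar>sw (dk 0) i\<bar> + \<bar>sw dl i\<bar> \<le> K"
        unfolding K_def using i by (intro member_le_sum[of i "{1..n}"]) auto
      from mono have "(\<exists>L. (\<lambda>k. sw (dk k) i) \<longlonglongrightarrow> L) \<and> (\<forall>k. \<bar>sw (dk k) i\<bar> \<le> K)"
      proof
        assume inc: "incseq dk"
        have b1: "sw (dk k) i \<le> sw dl i" for k using swmono[OF dkpos incseq_le[OF inc lim] i] .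
        have b2: "sw (dk 0) i \<le> sw (dk k) i" for k using swmono[OF dkpos _ i, of 0 "dk k"] inc
          by (auto simp: incseq_def)
        have "incseq (\<lambda>k. sw (dk k) i)" unfolding incseq_def
          using swmono[OF dkpos _ i] inc by (auto simp: incseq_def)
        then obtain L where "(\<lambda>k. sw (dk k) i) \<longlonglongrightarrow> L" using incseq_convergent[of _ "sw dl i"] b1 by blast
        moreover have "\<bar>sw (dk k) i\<bar> \<le> K" for k using b1[of k] b2[of k] Ki by linarith
        ultimately show ?thesis by blast
      next
        assume dec: "decseq dk"
        have b1: "sw dl i \<le> sw (dk k) i" for k using swmono[OF dl decseq_ge[OF dec lim] i] .
        have b2: "sw (dk k) i \<le> sw (dk 0) i" for k using swmono[OF dkpos _ i, of k "dk 0"] dec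
          by (auto simp: decseq_def)
        have "decseq (\<lambda>k. sw (dk k) i)" unfolding decseq_def
          using swmono[OF dkpos _ i] dec by (auto simp: decseq_def)
        then obtain L where "(\<lambda>k. sw (dk k) i) \<longlonglongrightarrow> L" using decseq_convergent[of _ "sw dl i"] b1 by blast
        moreover have "\<bar>sw (dk k) i\<bar> \<le> K" for k using b1[of k] b2[of k] Ki by linarith
        ultimately show ?thesis by blast
      qed
      thus "\<exists>L. (\<lambda>k. sw (dk k) i) \<longlonglongrightarrow> L" "\<forall>k. \<bar>sw (dk k) i\<bar> \<le> K" by auto
    qed
    define L where "L i = (if 1 \<le> i \<and> i \<le> n then lim (\<lambda>k. sw (dk k) i) else 0)" for i
    define v where "v k i = (if 1 \<le> i \<and> i \<le> n then sw (dk k) i else 0)" for k i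
    have vlim: "(\<lambda>k. v k j) \<longlonglongrightarrow> L j" for j
      using conv[of j] unfolding v_def L_def by (auto simp: convergent_LIMSEQ_iff[symmetric] convergent_def)
    have vconf: "conf n (dk k) (v k) = conf n (dk k) (sw (dk k))" for k
      by (rule conf_cong[OF n]) (simp add: v_def)
    define a where "a = min b (dl / 2)"
    have a: "0 < a" unfolding a_def using bpos dl by simp
    have adm_k: "adm a (b + (a * real_of_int n + 2 * (K + \<bar>x 0\<bar>))) (conf n (dk k) (v k))" for k
    proof (rule adm_conf[OF n])
      show "a \<le> dk k" using half[of k] unfolding a_def by linarith
    qed (use a bnd in \<open>auto simp: a_def v_def\<close>)
    have climit: "\<And>j. (\<lambda>k. conf n (dk k) (v k) j) \<longlonglongrightarrow> conf n dl L j"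
      by (rule conf_tendsto[OF n vlim lim])
    have Nlim: "(\<lambda>k. Nf (conf n (dk k) (v k)) i) \<longlonglongrightarrow> Nf (conf n dl L) i" for i
      by (rule Nf_tendsto[OF a adm_k climit])
    have "sol n dl L"
      unfolding sol_def
    proof (intro allI impI)
      fix i assume i: "1 \<le> i \<and> i \<le> n"
      have "Nf (conf n (dk k) (v k)) i = 0" for k using sw[OF dkpos[of k]] i unfolding vconf sol_def by auto
      thus "Nf (conf n dl L) i = 0" using Nlim[of i] LIMSEQ_unique by (simp add: LIMSEQ_const_iff)
    qed
    hence "L i = sw dl i" if "1 \<le> i" "i \<le> n" for i
      using sol_mono[OF n dl order_refl \<open>sol n dl L\<close> sw[OF dl] that]
            sol_mono[OF n dl order_refl sw[OF dl] \<open>sol n dl L\<close> that] by simp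
    hence "conf n dl L = conf n dl (sw dl)" by (intro conf_cong[OF n]) auto
    thus ?thesis using Nlim[of 0] unfolding \<phi>_def vconf by simp
  qed
  define D where "D = {d. 0 < d \<and> \<phi> d \<le> 0}"
  have mgD: "mg / 2 \<in> D" unfolding D_def using phi_neg[of "mg/2"] mg_pos by auto
  hence Dne: "D \<noteq> {}" by auto
  have Dbdd: "bdd_above D"
  proof (rule bdd_aboveI[of _ Mg])
    fix d assume dD: "d \<in> D"
    show "d \<le> Mg"
    proof (rule ccontr)
      assume "\<not> d \<le> Mg"
      hence "0 < \<phi> d" using phi_pos by simp
      with dD show False by (simp add: D_def)
    qed
  qed
  define ds where "ds = Sup D"
  have ds_ge: "mg / 2 \<le> ds" unfolding ds_def by (rule cSup_upper[OF mgD Dbdd])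
  have ds: "0 < ds" using ds_ge mg_pos by linarith
  have inv2: "inverse (real (Suc (Suc k))) \<le> 1/2" for k by (simp add: field_simps)
  have le0: "\<phi> ds \<le> 0"
  proof -
    define dk where "dk k = ds * (1 - inverse (real (Suc (Suc k))))" for k
    have lim: "dk \<longlonglongrightarrow> ds"
    proof -
      have "(\<lambda>k. inverse (real (Suc (Suc k)))) \<longlonglongrightarrow> 0"
        by (rule LIMSEQ_Suc[OF LIMSEQ_inverse_real_of_nat])
      hence "dk \<longlonglongrightarrow> ds * (1 - 0)" unfolding dk_def by (intro tendsto_intros)
      thus ?thesis by simp
    qed
    have half: "ds / 2 \<le> dk k" for k
    proof -
      have "1/2 \<le> 1 - inverse (real (Suc (Suc k)))" using inv2[of k] by linarith
      hence "ds * (1/2) \<le> ds * (1 - inverse (real (Suc (Suc k))))" using ds by (intro mult_left_mono) auto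
      thus ?thesis unfolding dk_def by simp
    qed
    have inc: "incseq dk" unfolding incseq_def dk_def
    proof (intro allI impI)
      fix k l :: nat assume "k \<le> l"
      hence "inverse (real (Suc (Suc l))) \<le> inverse (real (Suc (Suc k)))" by (simp add: field_simps)
      thus "ds * (1 - inverse (real (Suc (Suc k)))) \<le> ds * (1 - inverse (real (Suc (Suc l))))"
        using ds by (intro mult_left_mono) auto
    qed
    have "\<phi> (dk k) \<le> 0" for k
    proof -
      have "dk k < ds" unfolding dk_def using ds by simp
      then obtain d' where d': "d' \<in> D" "dk k < d'" using less_cSup_iff[OF Dne Dbdd] unfolding ds_def by blast
      have "0 < dk k" using half[of k] ds by linarith
      hence "\<phi> (dk k) \<le> \<phi> d'" using phi_mono d' by auto
      thus ?thesis using d' unfolding D_def by auto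
    qed
    thus ?thesis using core[OF lim ds half] inc by (intro LIMSEQ_le_const2) auto
  qed
  have ge0: "0 \<le> \<phi> ds"
  proof -
    define dk where "dk k = ds * (1 + inverse (real (Suc k)))" for k
    have lim: "dk \<longlonglongrightarrow> ds"
    proof -
      have "dk \<longlonglongrightarrow> ds * (1 + 0)" unfolding dk_def by (intro tendsto_intros LIMSEQ_inverse_real_of_nat)
      thus ?thesis by simp
    qed
    have gt: "ds < dk k" for k unfolding dk_def using ds by simp
    have half: "ds / 2 \<le> dk k" for k using gt[of k] ds by linarith
    have dec: "decseq dk" unfolding decseq_def dk_def
    proof (intro allI impI)
      fix k l :: nat assume "k \<le> l"
      hence "inverse (real (Suc l)) \<le> inverse (real (Suc k))" by (simp add: field_simps)
      thus "ds * (1 + inverse (real (Suc l))) \<le> ds * (1 + inverse (real (Suc k)))"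
        using ds by (intro mult_left_mono) auto
    qed
    have "0 \<le> \<phi> (dk k)" for k
    proof (rule ccontr)
      assume "\<not> 0 \<le> \<phi> (dk k)"
      hence "dk k \<in> D" unfolding D_def using gt[of k] ds by auto
      hence "dk k \<le> ds" unfolding ds_def by (rule cSup_upper[OF _ Dbdd])
      thus False using gt[of k] by simp
    qed
    thus ?thesis using core[OF lim ds half] dec by (intro LIMSEQ_le_const) auto
  qed
  define y where "y = conf n ds (sw ds)"
  have phi0: "Nf y 0 = 0" using le0 ge0 unfolding y_def \<phi>_def by simp
  show ?thesis
  proof (intro exI[of _ y] conjI allI impI)
    show "y k = x k" if "k \<le> 0" for k using that by (simp add: y_def conf_left)
    show "mg \<le> y (k + 1) - y k" for k unfolding y_def
      by (rule gap_lower[OF n ds sw[OF ds]]) (use phi0 in \<open>simp add: y_def\<close>)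
    show "y (k + 1) - y k \<le> Mg" for k unfolding y_def
      by (rule gap_upper[OF n ds sw[OF ds]]) (use phi0 in \<open>simp add: y_def\<close>)
    fix i assume "0 \<le> i \<and> i \<le> n"
    thus "Nf y i = 0" using phi0 sw[OF ds] unfolding sol_def y_def by (cases "i = 0") auto
  qed
qed

end

context eqsetup begin

lemma limit_config:
  "\<exists>Yl. (\<forall>k\<le>0. Yl k = x k) \<and> (\<forall>k. mg \<le> Yl (k + 1) - Yl k \<and> Yl (k + 1) - Yl k \<le> Mg) \<and>
        (\<forall>i\<ge>0. Nf Yl i = 0)"
proof -
  have "\<forall>k::nat. \<exists>y. (\<forall>j\<le>0. y j = x j) \<and> (\<forall>j. mg \<le> y (j + 1) - y j \<and> y (j + 1) - y j \<le> Mg) \<and>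
             (\<forall>i. 0 \<le> i \<and> i \<le> int k + 1 \<longrightarrow> Nf y i = 0)"
    by (intro allI finite_stage) simp
  then obtain Y where Y0: "\<And>k j. j \<le> 0 \<Longrightarrow> Y k j = x j"
    and Yg: "\<And>k j. mg \<le> Y k (j + 1) - Y k j \<and> Y k (j + 1) - Y k j \<le> Mg"
    and YN: "\<And>k i. 0 \<le> i \<Longrightarrow> i \<le> int k + 1 \<Longrightarrow> Nf (Y k) i = 0"
    by metis
  have bnd: "\<bar>Y k j\<bar> \<le> \<bar>x j\<bar> + \<bar>x 0\<bar> + Mg * \<bar>real_of_int j\<bar>" for k j
  proof (cases "j \<le> 0")
    case True
    have "0 \<le> Mg * \<bar>real_of_int j\<bar>" using mg_le_Mg mg_pos by simp
    thus ?thesis using Y0[OF True] by simp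
  next
    case False
    have "mg * real_of_int (j - 0) \<le> Y k j - Y k 0"
      by (rule gap_sum_ge) (use Yg[of k "_ - 1"] False in auto)
    moreover have "Y k j - Y k 0 \<le> Mg * real_of_int (j - 0)"
      by (rule gap_sum_le) (use Yg[of k "_ - 1"] False in auto)
    moreover have "0 \<le> mg * real_of_int j" using mg_pos False by simp
    ultimately show ?thesis using Y0[of 0] False by (simp add: abs_if)
  qed
  define P where "P n s \<longleftrightarrow> convergent (\<lambda>k. Y (s k) (int n))" for n and s :: "nat \<Rightarrow> nat"
  interpret sub: subseqs P
  proof
    fix n and s :: "nat \<Rightarrow> nat" assume s: "strict_mono s"
    have "bounded (range (\<lambda>k. Y (s k) (int n)))"
    proof (rule boundedI[of _ "\<bar>x (int n)\<bar> + \<bar>x 0\<bar> + Mg * \<bar>real_of_int (int n)\<bar>"])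
      fix z assume "z \<in> range (\<lambda>k. Y (s k) (int n))"
      then obtain k where "z = Y (s k) (int n)" by auto
      thus "norm z \<le> \<bar>x (int n)\<bar> + \<bar>x 0\<bar> + Mg * \<bar>real_of_int (int n)\<bar>" using bnd[of "s k" "int n"] by simp
    qed
    then obtain l r where r: "strict_mono r" "((\<lambda>k. Y (s k) (int n)) \<circ> r) \<longlonglongrightarrow> l"
      using bounded_imp_convergent_subsequence by blast
    thus "\<exists>r'. strict_mono r' \<and> P n (s \<circ> r')"
      unfolding P_def by (intro exI[of _ r]) (auto simp: convergent_def o_def)
  qed
  define r where "r = sub.diagseq"
  have r: "strict_mono r" unfolding r_def by (rule sub.subseq_diagseq)
  have convn: "convergent (\<lambda>k. Y (r k) (int n))" for n
  proof -
    have "P n (sub.diagseq \<circ> (+) (Suc n))"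
    proof (rule sub.diagseq_holds)
      fix r' s :: "nat \<Rightarrow> nat" and n assume "strict_mono r'" "P n s"
      thus "P n (s \<circ> r')" unfolding P_def
        using convergent_subseq_convergent[of "\<lambda>k. Y (s k) (int n)" r'] by (simp add: o_def)
    qed
    then obtain L where "(\<lambda>k. Y (r (k + Suc n)) (int n)) \<longlonglongrightarrow> L"
      unfolding P_def convergent_def r_def by (auto simp: o_def add.commute)
    hence "(\<lambda>k. Y (r k) (int n)) \<longlonglongrightarrow> L" by (rule LIMSEQ_offset)
    thus ?thesis by (auto simp: convergent_def)
  qed
  have conv: "convergent (\<lambda>k. Y (r k) j)" for j
  proof (cases "j \<le> 0")
    case True then show ?thesis using Y0 by (simp add: convergent_const)
  next
    case False
    then show ?thesis using convn[of "nat j"] by simp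
  qed
  define Yl where "Yl j = lim (\<lambda>k. Y (r k) j)" for j
  have Ylim: "(\<lambda>k. Y (r k) j) \<longlonglongrightarrow> Yl j" for j
    unfolding Yl_def using conv[of j] by (simp add: convergent_LIMSEQ_iff)
  show ?thesis
  proof (intro exI[of _ Yl] conjI allI impI)
    fix k :: int
    show "k \<le> 0 \<Longrightarrow> Yl k = x k" using Ylim[of k] Y0 by (simp add: LIMSEQ_const_iff)
    have gl: "(\<lambda>n. Y (r n) (k + 1) - Y (r n) k) \<longlonglongrightarrow> Yl (k + 1) - Yl k"
      by (intro tendsto_intros Ylim)
    show "mg \<le> Yl (k + 1) - Yl k" using Yg by (intro LIMSEQ_le_const[OF gl]) auto
    show "Yl (k + 1) - Yl k \<le> Mg" using Yg by (intro LIMSEQ_le_const2[OF gl]) auto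
  next
    fix i :: int assume i: "0 \<le> i"
    have adm: "adm mg 0 (Y (r k))" for k by (rule adm_gaps) (use Yg in auto)
    have lim: "(\<lambda>k. Nf (Y (r k)) i) \<longlonglongrightarrow> Nf Yl i"
      by (rule Nf_tendsto[OF mg_pos adm Ylim])
    have ev: "Nf (Y (r k)) i = 0" if "nat i \<le> k" for k
    proof -
      have "k \<le> r k" using seq_suble[OF r] .
      thus ?thesis using that i by (intro YN) auto
    qed
    have "0 \<le> Nf Yl i" by (rule LIMSEQ_le_const[OF lim]) (use ev in \<open>intro exI[of _ "nat i"], auto\<close>)
    moreover have "Nf Yl i \<le> 0" by (rule LIMSEQ_le_const2[OF lim]) (use ev in \<open>intro exI[of _ "nat i"], auto\<close>)
    ultimately show "Nf Yl i = 0" by simp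
  qed
qed

lemma equil:
  assumes g: "\<And>k. mg \<le> y (k + 1) - y k" and N: "Nf y i = 0"
  shows "in_equilibrium F y i"
proof -
  have adm: "adm mg 0 y" using g by (rule adm_gaps)
  have distL: "mg * (real j + 1) \<le> y i - y (i - 1 - int j)" for j
    using adm[unfolded adm_def, rule_format, of "i - 1 - int j" i] by (simp add: algebra_simps)
  have distR: "mg * (real j + 1) \<le> y (i + 1 + int j) - y i" for j
    using adm[unfolded adm_def, rule_format, of i "i + 1 + int j"] by (simp add: algebra_simps)
  have ccj: "cc \<le> mg * (real j + 1)" for j
  proof -
    have "mg * 1 \<le> mg * (real j + 1)" using mg_pos by (intro mult_left_mono) auto
    thus ?thesis using cc_less by simp
  qed
  have GL: "G (y i - y (i - 1 - int j)) = F (y i - y (i - 1 - int j))" for j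
    using ccj[of j] distL[of j] by (intro G_F) linarith
  have GR: "G (y (i + 1 + int j) - y i) = F (y (i + 1 + int j) - y i)" for j
    using ccj[of j] distR[of j] by (intro G_F) linarith
  have posL: "0 \<le> F (y i - y (i - 1 - int j))" for j using G_pos GL[of j] by (metis less_imp_le)
  have posR: "0 \<le> F (y (i + 1 + int j) - y i)" for j using G_pos GR[of j] by (metis less_imp_le)
  have hsL: "((\<lambda>j. F (y i - y (i - 1 - int j))) has_sum Lf y i) UNIV"
  proof (rule sums_nonneg_imp_has_sum_strong)
    show "(\<lambda>j. F (y i - y (i - 1 - int j))) sums Lf y i"
      using summable_L[OF mg_pos adm, of i] unfolding Lf_def GL by (simp add: summable_sums)
  qed (use posL in auto)
  have hsR: "((\<lambda>j. F (y (i + 1 + int j) - y i)) has_sum Rf y i) UNIV"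
  proof (rule sums_nonneg_imp_has_sum_strong)
    show "(\<lambda>j. F (y (i + 1 + int j) - y i)) sums Rf y i"
      using summable_R[OF mg_pos adm, of i] unfolding Rf_def GR by (simp add: summable_sums)
  qed (use posR in auto)
  have bijL: "bij_betw (\<lambda>j::nat. i - 1 - int j) UNIV {..<i}"
    by (rule bij_betw_byWitness[where f'="\<lambda>m. nat (i - 1 - m)"]) auto
  have bijR: "bij_betw (\<lambda>j::nat. i + 1 + int j) UNIV {i<..}"
    by (rule bij_betw_byWitness[where f'="\<lambda>m. nat (m - i - 1)"]) auto
  have sL: "(\<lambda>m. F (y i - y m)) summable_on {..<i}"
    using summable_on_reindex_bij_betw[OF bijL, of "\<lambda>m. F (y i - y m)"] hsL
    by (auto simp: summable_on_def)
  have sR: "(\<lambda>m. F (y m - y i)) summable_on {i<..}"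
    using summable_on_reindex_bij_betw[OF bijR, of "\<lambda>m. F (y m - y i)"] hsR
    by (auto simp: summable_on_def)
  have iL: "(\<Sum>\<^sub>\<infinity>m\<in>{..<i}. F (y i - y m)) = Lf y i"
    using infsum_reindex_bij_betw[OF bijL, of "\<lambda>m. F (y i - y m)"] hsL by (simp add: has_sum_iff)
  have iR: "(\<Sum>\<^sub>\<infinity>m\<in>{i<..}. F (y m - y i)) = Rf y i"
    using infsum_reindex_bij_betw[OF bijR, of "\<lambda>m. F (y m - y i)"] hsR by (simp add: has_sum_iff)
  show ?thesis unfolding in_equilibrium_def using sL sR iL iR N by (simp add: Nf_def)
qed

end

theorem mainTheorem8:
  fixes F :: "real \<Rightarrow> real" and x :: "int \<Rightarrow> real" and b B :: real
  assumes Fpos: "\<And>t. 0 < t \<Longrightarrow> 0 < F t"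
    and Fdec: "\<And>s t. 0 < s \<Longrightarrow> s < t \<Longrightarrow> F t < F s"
    and Fcont: "continuous_on {0<..} F"
    and Fint: "F integrable_on {1..}"
    and bB: "0 < b" "b < B"
    and xneg: "x (-1) < 0"
    and gaps: "\<And>i::int. i \<ge> 1 \<Longrightarrow> b \<le> x (-i) - x (-i-1) \<and> x (-i) - x (-i-1) \<le> B"
    and x0: "x 0 > x (-1)"
  shows "\<exists>y :: int \<Rightarrow> real.
           (\<forall>n\<le>0. y n = x n) \<and>
           (\<forall>i\<ge>0. y i < y (i+1)) \<and>
           (\<forall>i\<ge>0. in_equilibrium F y i) \<and>
           (\<forall>i\<ge>0. min b (x 0 - x (-1)) \<le> y (i+1) - y i \<and>
                   y (i+1) - y i \<le> max B (x 0 - x (-1)))"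
proof -
  interpret E: eqsetup F x b B
    by (unfold_locales) (use assms in auto)
  obtain Yl where Y0: "\<forall>k\<le>0. Yl k = x k"
    and Yg: "\<forall>k. E.mg \<le> Yl (k + 1) - Yl k \<and> Yl (k + 1) - Yl k \<le> E.Mg"
    and YN: "\<forall>i\<ge>0. E.Nf Yl i = 0"
    using E.limit_config by blast
  show ?thesis
  proof (intro exI[of _ Yl] conjI allI impI)
    show "n \<le> 0 \<Longrightarrow> Yl n = x n" for n using Y0 by auto
    fix i :: int assume i: "0 \<le> i"
    show "Yl i < Yl (i + 1)" using Yg[rule_format, of i] E.mg_pos by simp
    show "in_equilibrium F Yl i" by (rule E.equil) (use Yg YN i in auto)
    show "min b (x 0 - x (- 1)) \<le> Yl (i + 1) - Yl i"
      using Yg[rule_format, of i] unfolding E.mg_def E.g0_def by simp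
    show "Yl (i + 1) - Yl i \<le> max B (x 0 - x (- 1))"
      using Yg[rule_format, of i] unfolding E.Mg_def E.g0_def by simp
  qed
qed


end
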